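(* Let $\kappa\in\mathbb{N}$ with $\kappa\ge2$ and let $\mathsf{A}\in\mathscr{M}_\kappa^+$, with $(a,b,c)\in\mathbb{R}^3$ such that $\mathsf{A}=\mathsf{M}_\kappa(a,b,c)$. Then $a>\max\{|b|,|c|\}$, and the functions $f(a,b,c)=\frac{b(a-c)}{a^2-b^2}$ and $g(a,b,c)=\frac{ac-b^2}{a^2-b^2}$ satisfy $|f(a,b,c)|\le2$ and $|g(a,b,c)|\le1$.
   Context: $\mathsf{M}_\kappa(a,b,c)$ is the $(1+\kappa)\times(1+\kappa)$ matrix indexed by $\{0,\dots,\kappa\}$ with $(i,j)$ entry $a$ if $i=j$, $b$ if $i\neq j$ and ($i=0$ or $j=0$), and $c$ otherwise. $\mathscr{M}_\kappa^+$ is the set of positive definite matrices of the form $\mathsf{M}_\kappa(a,b,c)$. *)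

theory Defs
  imports "Jordan_Normal_Form.Matrix"
begin

definition M_mat :: "nat \<Rightarrow> real \<Rightarrow> real \<Rightarrow> real \<Rightarrow> real mat" where
  "M_mat \<kappa> a b c = mat (Suc \<kappa>) (Suc \<kappa>)
     (\<lambda>(i, j). if i = j then a else if i = 0 \<or> j = 0 then b else c)"

definition pos_def_mat :: "real mat \<Rightarrow> bool" where
  "pos_def_mat A \<longleftrightarrow> A \<in> carrier_mat (dim_row A) (dim_row A) \<and> transpose_mat A = A \<and>
     (\<forall>v \<in> carrier_vec (dim_row A). v \<noteq> 0\<^sub>v (dim_row A) \<longrightarrow> 0 < v \<bullet> (A *\<^sub>v v))"

definition M_plus :: "nat \<Rightarrow> real mat set" where
  "M_plus \<kappa> = {A. pos_def_mat A \<and> (\<exists>a b c. A = M_mat \<kappa> a b c)}"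

definition f_fun :: "real \<Rightarrow> real \<Rightarrow> real \<Rightarrow> real" where
  "f_fun a b c = b * (a - c) / (a\<^sup>2 - b\<^sup>2)"

definition g_fun :: "real \<Rightarrow> real \<Rightarrow> real \<Rightarrow> real" where
  "g_fun a b c = (a * c - b\<^sup>2) / (a\<^sup>2 - b\<^sup>2)"

end

theory Submission
  imports Defs
begin

definition tv :: "nat \<Rightarrow> real \<Rightarrow> real \<Rightarrow> real \<Rightarrow> real vec" where
  "tv n x y z = vec n (\<lambda>i. if i = 0 then x else if i = 1 then y else if i = 2 then z else 0)"

lemma sum3:
  assumes "3 \<le> (n::nat)"
  shows "(\<Sum>j\<in>{0..<n}. h j * (if j = 0 then x else if j = 1 then y else if j = 2 then z else 0))
     = h 0 * x + h 1 * y + h 2 * (z::real)"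
proof -
  have "(\<Sum>j\<in>{0..<n}. h j * (if j = 0 then x else if j = 1 then y else if j = 2 then z else 0))
     = (\<Sum>j\<in>{0,1,2}. h j * (if j = 0 then x else if j = 1 then y else if j = 2 then z else 0))"
    using assms by (intro sum.mono_neutral_right) auto
  also have "\<dots> = h 0 * x + h 1 * y + h 2 * z" by simp
  finally show ?thesis .
qed

lemma qf:
  assumes "2 \<le> \<kappa>"
  shows "tv (Suc \<kappa>) x y z \<bullet> (M_mat \<kappa> a b c *\<^sub>v tv (Suc \<kappa>) x y z)
    = a*(x^2+y^2+z^2) + 2*b*x*(y+z) + 2*c*y*z"
proof -
  have n: "3 \<le> Suc \<kappa>" using assms by simp
  have r: "(M_mat \<kappa> a b c *\<^sub>v tv (Suc \<kappa>) x y z) $ i =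
     (if i = 0 then a else b) * x + (if i = 1 then a else if i = 0 then b else c) * y
      + (if i = 2 then a else if i = 0 then b else c) * z" if "i < Suc \<kappa>" for i
    using that sum3[OF n, of "\<lambda>j. (if i = j then a else if i = 0 \<or> j = 0 then b else c)" x y z]
    by (simp add: M_mat_def tv_def mult_mat_vec_def scalar_prod_def)
  have "tv (Suc \<kappa>) x y z \<bullet> (M_mat \<kappa> a b c *\<^sub>v tv (Suc \<kappa>) x y z)
     = (\<Sum>i\<in>{0..<Suc \<kappa>}. (M_mat \<kappa> a b c *\<^sub>v tv (Suc \<kappa>) x y z) $ i *
         (if i = 0 then x else if i = 1 then y else if i = 2 then z else 0))"
    by (simp add: scalar_prod_def tv_def M_mat_def mult.commute)
  also have "\<dots> = (\<Sum>i\<in>{0..<Suc \<kappa>}. ((if i = 0 then a else b) * x + (if i = 1 then a else if i = 0 then b else c) * y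
      + (if i = 2 then a else if i = 0 then b else c) * z) *
         (if i = 0 then x else if i = 1 then y else if i = 2 then z else 0))"
    by (intro sum.cong) (auto simp: r)
  also have "\<dots> = a*(x^2+y^2+z^2) + 2*b*x*(y+z) + 2*c*y*z"
    by (subst sum3[OF n]) (simp add: power2_eq_square algebra_simps)
  finally show ?thesis .
qed

lemma pos:
  assumes "2 \<le> \<kappa>" "pos_def_mat (M_mat \<kappa> a b c)" "x \<noteq> 0 \<or> y \<noteq> 0 \<or> z \<noteq> 0"
  shows "0 < a*(x^2+y^2+z^2) + 2*b*x*(y+z) + 2*c*y*z"
proof -
  have d: "dim_row (M_mat \<kappa> a b c) = Suc \<kappa>" by (simp add: M_mat_def)
  have "tv (Suc \<kappa>) x y z \<noteq> 0\<^sub>v (Suc \<kappa>)"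
  proof
    assume h: "tv (Suc \<kappa>) x y z = 0\<^sub>v (Suc \<kappa>)"
    have "tv (Suc \<kappa>) x y z $ 0 = 0" "tv (Suc \<kappa>) x y z $ 1 = 0" "tv (Suc \<kappa>) x y z $ 2 = 0"
      using assms(1) by (simp_all add: h)
    thus False using assms(1,3) by (simp add: tv_def)
  qed
  moreover have "tv (Suc \<kappa>) x y z \<in> carrier_vec (Suc \<kappa>)" by (simp add: tv_def)
  ultimately show ?thesis using assms(2) qf[OF assms(1)] unfolding pos_def_mat_def d by metis
qed

theorem lemma4p8:
  fixes \<kappa> :: nat and A :: "real mat" and a b c :: real
  assumes "\<kappa> \<ge> 2"
    and "A \<in> M_plus \<kappa>"
    and "A = M_mat \<kappa> a b c"
  shows "a > max \<bar>b\<bar> \<bar>c\<bar> \<and> \<bar>f_fun a b c\<bar> \<le> 2 \<and> \<bar>g_fun a b c\<bar> \<le> 1"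
proof -
  have P: "pos_def_mat (M_mat \<kappa> a b c)" using assms(2,3) by (simp add: M_plus_def)
  note p = pos[OF assms(1) P]
  have h1: "0 < 2*a + 2*b" using p[of 1 1 0] by simp
  have h2: "0 < 2*a - 2*b" using p[of 1 "-1" 0] by simp
  have h3: "0 < 2*a + 2*c" using p[of 0 1 1] by simp
  have h4: "0 < 2*a - 2*c" using p[of 0 1 "-1"] by simp
  have ac: "a + c > 0" using h3 by simp
  have h5: "0 < a*((a+c)^2+b^2+b^2) + 2*b*(a+c)*(-b-b) + 2*c*(-b)*(-b)"
    using p[of "a+c" "-b" "-b"] ac by simp
  have "(a+c)*(a*(a+c) - 2*b^2) > 0" using h5 by (simp add: power2_eq_square algebra_simps)
  hence k: "a*(a+c) > 2*b^2" using ac by (simp add: zero_less_mult_iff)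
  have ab: "a^2 - b^2 > 0"
  proof -
    have "0 < (a+b)*(a-b)" using h1 h2 by simp
    thus ?thesis by (simp add: power2_eq_square algebra_simps)
  qed
  have m: "a > max \<bar>b\<bar> \<bar>c\<bar>" using h1 h2 h3 h4 by auto
  have g: "\<bar>a*c - b^2\<bar> \<le> a^2 - b^2"
  proof -
    have a0: "a > 0" using h1 h2 by simp
    have "a*c \<le> a*a" using a0 h4 by (intro mult_left_mono) auto
    thus ?thesis using k by (simp add: abs_le_iff power2_eq_square algebra_simps)
  qed
  have "\<bar>b\<bar> * (a - c) \<le> a * (a - c)" using m h4 by (intro mult_right_mono) auto
  then have f: "\<bar>b*(a-c)\<bar> \<le> 2*(a^2-b^2)" using k h4
  proof -
    assume u: "\<bar>b\<bar> * (a - c) \<le> a * (a - c)"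
    have "\<bar>b*(a-c)\<bar> = \<bar>b\<bar> * (a - c)" using h4 by (simp add: abs_mult)
    thus ?thesis using u k by (simp add: power2_eq_square algebra_simps)
  qed
  show ?thesis using m f g ab
    by (simp add: f_fun_def g_fun_def abs_divide divide_le_eq)
qed

end
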